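(* For $k\in\mathbb N$ let $\overline Y^k_t:=(Y_t\wedge k)\vee(-k)$, $t\in[0,T]$. If $Y^*\in\mathcal L^1(\mathcal Q)$ and $\rho_{\mathcal Q}$ is continuous from above at $0$, then $$\lim_{k\to\infty}\sup_{\mathrm Q\in\overline{\mathcal Q}}\Big|\sup_{\tau\in\mathcal T}\mathbb E_{\mathrm Q}[Y_\tau]-\sup_{\tau\in\mathcal T}\mathbb E_{\mathrm Q}[\overline Y^k_\tau]\Big|=0.$$
   Context: Let $(\Omega,\mathcal F,(\mathcal F_t)_{0\le t\le T},\mathrm P)$ be a filtered probability space ($0<T<\infty$) with right-continuous filtration, $\mathcal F=\mathcal F_T$, $\mathcal F_0$ trivial and containing all $\mathrm P$-null sets. $\mathcal T$ is the set of stopping times $\tau\le T$. $\mathcal Q$ is a nonempty set of probability measures on $\mathcal F$, each absolutely continuous w.r.t. $\mathrm P$. $\mathcal L^1(\mathcal Q)$ is the set of random variables $X$ with $\sup_{\mathrm Q\in\mathcal Q}\mathbb E_{\mathrm Q}[|X|]<\infty$. $Y=(Y_t)_{0\le t\le T}$ is a right-continuous adapted process with bounded paths, quasi left-uppersemicontinuous w.r.t. $\mathrm P$, and $Y^*:=\sup_{t\in[0,T]}|Y_t|$. $\mathcal X$ is the set of random variables $X$ with $|X|\le C(Y^*+1)$ $\mathrm P$-a.s. for some $C>0$; $\rho_{\mathcal Q}(X)=\sup_{\mathrm Q\in\mathcal Q}\mathbb E_{\mathrm Q}[X]$ for $X\in\mathcal X$; $\rho_{\mathcal Q}$ is continuous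 from above at $0$ if $\rho_{\mathcal Q}(X_n)\searrow0$ whenever $X_n\in\mathcal X$, $X_n\searrow0$ $\mathrm P$-a.s. $\overline{\mathcal Q}$ is the set of probability measures $\mathrm Q$ on $\mathcal F$ such that every $X\in\mathcal X$ is $\mathrm Q$-integrable and $\mathbb E_{\mathrm Q}[X]\le\rho_{\mathcal Q}(X)$ for all $X\in\mathcal X$. *)

theory Defs
  imports "HOL-Probability.Probability"
begin

text \<open>The reference probability P is the measure M; the
filtration is F :: real \<Rightarrow> 'a measure (only its values on [0,T] matter);
a process is a function Y :: real \<Rightarrow> 'a \<Rightarrow> real with Y t the value at time t.\<close>

definition usual_filtration :: "'a measure \<Rightarrow> real \<Rightarrow> (real \<Rightarrow> 'a measure) \<Rightarrow> bool" where
  "usual_filtration M T F \<longleftrightarrow>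
     (\<forall>t\<in>{0..T}. space (F t) = space M \<and> sets (F t) \<subseteq> sets M) \<and>
     (\<forall>s t. 0 \<le> s \<and> s \<le> t \<and> t \<le> T \<longrightarrow> sets (F s) \<subseteq> sets (F t)) \<and>
     (\<forall>t\<in>{0..<T}. sets (F t) = (\<Inter>s\<in>{t<..T}. sets (F s))) \<and>
     sets (F T) = sets M \<and>
     (\<forall>A\<in>sets (F 0). measure M A = 0 \<or> measure M A = 1) \<and>
     null_sets M \<subseteq> sets (F 0)"

definition stopping_times :: "'a measure \<Rightarrow> real \<Rightarrow> (real \<Rightarrow> 'a measure) \<Rightarrow> ('a \<Rightarrow> real) set" where
  "stopping_times M T F =
     {\<tau>. (\<forall>\<omega>\<in>space M. \<tau> \<omega> \<in> {0..T}) \<and>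
         (\<forall>t\<in>{0..T}. {\<omega>\<in>space M. \<tau> \<omega> \<le> t} \<in> sets (F t))}"

definition right_continuous_process :: "'a measure \<Rightarrow> real \<Rightarrow> (real \<Rightarrow> 'a \<Rightarrow> real) \<Rightarrow> bool" where
  "right_continuous_process M T Y \<longleftrightarrow>
     (\<forall>\<omega>\<in>space M. \<forall>t\<in>{0..<T}. ((\<lambda>s. Y s \<omega>) \<longlongrightarrow> Y t \<omega>) (at_right t))"

definition adapted_process :: "real \<Rightarrow> (real \<Rightarrow> 'a measure) \<Rightarrow> (real \<Rightarrow> 'a \<Rightarrow> real) \<Rightarrow> bool" where
  "adapted_process T F Y \<longleftrightarrow> (\<forall>t\<in>{0..T}. Y t \<in> borel_measurable (F t))"

definition bounded_paths :: "'a measure \<Rightarrow> real \<Rightarrow> (real \<Rightarrow> 'a \<Rightarrow> real) \<Rightarrow> bool" where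
  "bounded_paths M T Y \<longleftrightarrow> (\<forall>\<omega>\<in>space M. bounded ((\<lambda>t. Y t \<omega>) ` {0..T}))"

definition quasi_left_usc :: "'a measure \<Rightarrow> real \<Rightarrow> (real \<Rightarrow> 'a measure) \<Rightarrow> (real \<Rightarrow> 'a \<Rightarrow> real) \<Rightarrow> bool" where
  "quasi_left_usc M T F Y \<longleftrightarrow>
     (\<forall>\<tau>s \<tau>. (\<forall>n. \<tau>s n \<in> stopping_times M T F) \<and> \<tau> \<in> stopping_times M T F \<and>
        (\<forall>\<omega>\<in>space M. incseq (\<lambda>n. \<tau>s n \<omega>) \<and> (\<lambda>n. \<tau>s n \<omega>) \<longlonglongrightarrow> \<tau> \<omega>) \<longrightarrow>
        (AE \<omega> in M. limsup (\<lambda>n. ereal (Y (\<tau>s n \<omega>) \<omega>)) \<le> ereal (Y (\<tau> \<omega>) \<omega>)))"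

definition Ystar :: "real \<Rightarrow> (real \<Rightarrow> 'a \<Rightarrow> real) \<Rightarrow> 'a \<Rightarrow> real" where
  "Ystar T Y \<omega> = (SUP t\<in>{0..T}. \<bar>Y t \<omega>\<bar>)"

definition admissible_measures :: "'a measure \<Rightarrow> 'a measure set \<Rightarrow> bool" where
  "admissible_measures M Qs \<longleftrightarrow> Qs \<noteq> {} \<and>
     (\<forall>Q\<in>Qs. prob_space Q \<and> sets Q = sets M \<and> absolutely_continuous M Q)"

definition L1Q :: "'a measure \<Rightarrow> 'a measure set \<Rightarrow> ('a \<Rightarrow> real) set" where
  "L1Q M Qs = {X. X \<in> borel_measurable M \<and> (SUP Q\<in>Qs. \<integral>\<^sup>+ \<omega>. ennreal \<bar>X \<omega>\<bar> \<partial>Q) < \<infinity>}"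

definition Xspace :: "'a measure \<Rightarrow> real \<Rightarrow> (real \<Rightarrow> 'a \<Rightarrow> real) \<Rightarrow> ('a \<Rightarrow> real) set" where
  "Xspace M T Y = {X. X \<in> borel_measurable M \<and>
      (\<exists>C>0. AE \<omega> in M. \<bar>X \<omega>\<bar> \<le> C * (Ystar T Y \<omega> + 1))}"

definition rhoQ :: "'a measure set \<Rightarrow> ('a \<Rightarrow> real) \<Rightarrow> ereal" where
  "rhoQ Qs X = (SUP Q\<in>Qs. ereal (\<integral>\<omega>. X \<omega> \<partial>Q))"

definition cont_from_above_at_0 :: "'a measure \<Rightarrow> real \<Rightarrow> (real \<Rightarrow> 'a \<Rightarrow> real) \<Rightarrow> 'a measure set \<Rightarrow> bool" where
  "cont_from_above_at_0 M T Y Qs \<longleftrightarrow>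
     (\<forall>Xs. (\<forall>n. Xs n \<in> Xspace M T Y) \<and>
           (AE \<omega> in M. decseq (\<lambda>n. Xs n \<omega>) \<and> (\<lambda>n. Xs n \<omega>) \<longlonglongrightarrow> 0) \<longrightarrow>
           decseq (\<lambda>n. rhoQ Qs (Xs n)) \<and> (\<lambda>n. rhoQ Qs (Xs n)) \<longlonglongrightarrow> 0)"

definition Qbar :: "'a measure \<Rightarrow> real \<Rightarrow> (real \<Rightarrow> 'a \<Rightarrow> real) \<Rightarrow> 'a measure set \<Rightarrow> 'a measure set" where
  "Qbar M T Y Qs = {Q. prob_space Q \<and> sets Q = sets M \<and>
      (\<forall>X\<in>Xspace M T Y. integrable Q X \<and> ereal (\<integral>\<omega>. X \<omega> \<partial>Q) \<le> rhoQ Qs X)}"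

definition trunc_proc :: "(real \<Rightarrow> 'a \<Rightarrow> real) \<Rightarrow> nat \<Rightarrow> real \<Rightarrow> 'a \<Rightarrow> real" where
  "trunc_proc Y k t \<omega> = max (min (Y t \<omega>) (real k)) (- real k)"

definition stop_value :: "'a measure \<Rightarrow> real \<Rightarrow> (real \<Rightarrow> 'a measure) \<Rightarrow> 'a measure \<Rightarrow> (real \<Rightarrow> 'a \<Rightarrow> real) \<Rightarrow> ereal" where
  "stop_value M T F Q Y = (SUP \<tau>\<in>stopping_times M T F. ereal (\<integral>\<omega>. Y (\<tau> \<omega>) \<omega> \<partial>Q))"

end

theory Submission
  imports Defs
begin

lemma floor_time_bounds:
  fixes x :: real and m :: real
  assumes "0 < m"
  shows "x < (of_int \<lfloor>m * x\<rfloor> + 1) / m" and "(of_int \<lfloor>m * x\<rfloor> + 1) / m \<le> x + 1 / m"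
proof -
  have a: "of_int \<lfloor>m * x\<rfloor> \<le> m * x" "m * x < of_int \<lfloor>m * x\<rfloor> + 1" by linarith+
  show "x < (of_int \<lfloor>m * x\<rfloor> + 1) / m" using a assms by (simp add: field_simps)
  show "(of_int \<lfloor>m * x\<rfloor> + 1) / m \<le> x + 1 / m" using a assms by (simp add: field_simps)
qed

lemma Ytau_meas:
  assumes uf: "usual_filtration M T F"
    and rc: "right_continuous_process M T Y"
    and ad: "adapted_process T F Y"
    and tau: "\<tau> \<in> stopping_times M T F" and T0: "0 < T"
  shows "(\<lambda>\<omega>. Y (\<tau> \<omega>) \<omega>) \<in> borel_measurable M"
proof -
  have sub: "subalgebra M (F t)" if "t \<in> {0..T}" for t
    using uf that unfolding usual_filtration_def subalgebra_def by auto
  have Ym: "Y t \<in> borel_measurable M" if "t \<in> {0..T}" for t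
    using measurable_from_subalg[OF sub[OF that]] ad that unfolding adapted_process_def by blast
  have trange: "\<tau> \<omega> \<in> {0..T}" if "\<omega> \<in> space M" for \<omega>
    using tau that unfolding stopping_times_def by auto
  have taum: "\<tau> \<in> borel_measurable M"
    unfolding borel_measurable_iff_le
  proof
    fix a :: real
    show "{w \<in> space M. \<tau> w \<le> a} \<in> sets M"
    proof (cases "a < 0")
      case True
      have e: "{w \<in> space M. \<tau> w \<le> a} = {}" using trange True by force
      show ?thesis unfolding e by simp
    next
      case False
      show ?thesis
      proof (cases "a \<le> T")
        case True
        then have "{w \<in> space M. \<tau> w \<le> a} \<in> sets (F a)"
          using tau False unfolding stopping_times_def by auto
        then show ?thesis using sub[of a] True False unfolding subalgebra_def by auto
      next
        case False
        have e: "{w \<in> space M. \<tau> w \<le> a} = space M" using trange False by force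
        show ?thesis unfolding e by simp
      qed
    qed
  qed
  define s where "s n \<omega> = max 0 (min T ((of_int \<lfloor>real (Suc n) * \<tau> \<omega>\<rfloor> + 1) / real (Suc n)))" for n \<omega>
  define u where "u n \<omega> = Y (s n \<omega>) \<omega>" for n \<omega>
  have um: "u n \<in> borel_measurable M" for n
  proof -
    have g: "(\<lambda>\<omega>. \<lfloor>real (Suc n) * \<tau> \<omega>\<rfloor>) \<in> measurable M (count_space UNIV)"
      using measurable_compose[OF borel_measurable_times[OF borel_measurable_const taum] measurable_real_floor] .
    have f: "(\<lambda>\<omega>. Y (max 0 (min T ((of_int i + 1) / real (Suc n)))) \<omega>) \<in> borel_measurable M" for i :: int
      by (rule Ym) (use T0 in auto)
    show ?thesis
      unfolding u_def s_def
      by (rule measurable_compose_countable[where f="\<lambda>i \<omega>. Y (max 0 (min T ((of_int i + 1) / real (Suc n)))) \<omega>", OF f g])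
  qed
  show ?thesis
  proof (rule borel_measurable_LIMSEQ_real[OF _ um])
    fix \<omega> assume om: "\<omega> \<in> space M"
    define x where "x = \<tau> \<omega>"
    have x: "0 \<le> x" "x \<le> T" using trange[OF om] x_def by auto
    have lb: "x < (of_int \<lfloor>real (Suc n) * x\<rfloor> + 1) / real (Suc n)" for n
      using floor_time_bounds(1)[of "real (Suc n)" x] by simp
    have ub: "(of_int \<lfloor>real (Suc n) * x\<rfloor> + 1) / real (Suc n) \<le> x + 1 / real (Suc n)" for n
      using floor_time_bounds(2)[of "real (Suc n)" x] by simp
    show "(\<lambda>n. u n \<omega>) \<longlonglongrightarrow> Y (\<tau> \<omega>) \<omega>"
    proof (cases "x = T")
      case True
      have "s n \<omega> = T" for n
      proof -
        have "min T ((of_int \<lfloor>real (Suc n) * x\<rfloor> + 1) / real (Suc n)) = T"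
          using lb[of n] True by (simp only: min_def) simp
        then show ?thesis unfolding s_def x_def[symmetric] using x True by simp
      qed
      then show ?thesis unfolding u_def using True x_def by simp
    next
      case False
      then have xT: "x < T" using x by auto
      have s1: "x < s n \<omega>" for n
      proof -
        have "x < min T ((of_int \<lfloor>real (Suc n) * x\<rfloor> + 1) / real (Suc n))"
          using lb[of n] xT by (simp only: min_less_iff_conj)
        then show ?thesis unfolding s_def x_def[symmetric] by (simp only: less_max_iff_disj simp_thms)
      qed
      have s2: "s n \<omega> \<le> x + 1 / real (Suc n)" for n
      proof -
        have "min T ((of_int \<lfloor>real (Suc n) * x\<rfloor> + 1) / real (Suc n)) \<le> x + 1 / real (Suc n)"
          using ub[of n] by (simp only: min_le_iff_disj simp_thms)
        moreover have "0 \<le> x + 1 / real (Suc n)" using x by simp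
        ultimately show ?thesis unfolding s_def x_def[symmetric] by (simp only: max.bounded_iff)
      qed
      have l1: "(\<lambda>n. 1 / real (Suc n)) \<longlonglongrightarrow> 0"
        using LIMSEQ_Suc[OF lim_1_over_n] by simp
      have l2: "(\<lambda>n. x + 1 / real (Suc n)) \<longlonglongrightarrow> x"
        using tendsto_add[OF tendsto_const l1, of x] by simp
      have st: "(\<lambda>n. s n \<omega>) \<longlonglongrightarrow> x"
      proof (rule tendsto_sandwich[OF _ _ tendsto_const l2])
        show "\<forall>\<^sub>F n in sequentially. x \<le> s n \<omega>"
          by (rule always_eventually) (metis s1 less_imp_le)
        show "\<forall>\<^sub>F n in sequentially. s n \<omega> \<le> x + 1 / real (Suc n)"
          by (rule always_eventually) (metis s2)
      qed
      have ev: "\<forall>\<^sub>F n in sequentially. s n \<omega> \<in> {x<..} \<and> s n \<omega> \<noteq> x"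
        by (rule always_eventually) (metis s1 greaterThan_iff less_irrefl)
      have fl: "filterlim (\<lambda>n. s n \<omega>) (at_right x) sequentially"
        unfolding filterlim_at using ev st by (rule conjI)
      have rcx: "((\<lambda>t. Y t \<omega>) \<longlongrightarrow> Y x \<omega>) (at_right x)"
        using rc om x xT unfolding right_continuous_process_def by auto
      have "(\<lambda>n. Y (s n \<omega>) \<omega>) \<longlonglongrightarrow> Y x \<omega>"
        using filterlim_compose[OF rcx fl] .
      then show ?thesis unfolding u_def x_def .
    qed
  qed
qed


lemma sup_diff_bound:
  fixes a b :: "'t \<Rightarrow> real"
  assumes ne: "S \<noteq> {}"
    and ba: "\<And>x. x \<in> S \<Longrightarrow> \<bar>a x\<bar> \<le> B"
    and bb: "\<And>x. x \<in> S \<Longrightarrow> \<bar>b x\<bar> \<le> B"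
    and d: "\<And>x. x \<in> S \<Longrightarrow> \<bar>a x - b x\<bar> \<le> c"
  shows "\<bar>(SUP x\<in>S. ereal (a x)) - (SUP x\<in>S. ereal (b x))\<bar> \<le> ereal c"
proof -
  obtain x0 where x0: "x0 \<in> S" using ne by blast
  have A1: "(SUP x\<in>S. ereal (a x)) \<le> (SUP x\<in>S. ereal (b x)) + ereal c"
  proof (rule SUP_least)
    fix x assume x: "x \<in> S"
    have "ereal (a x) \<le> ereal (b x) + ereal c" using d[OF x] by simp
    also have "\<dots> \<le> (SUP x\<in>S. ereal (b x)) + ereal c"
      by (intro add_right_mono SUP_upper x)
    finally show "ereal (a x) \<le> (SUP x\<in>S. ereal (b x)) + ereal c" .
  qed
  have A2: "(SUP x\<in>S. ereal (b x)) \<le> (SUP x\<in>S. ereal (a x)) + ereal c"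
  proof (rule SUP_least)
    fix x assume x: "x \<in> S"
    have "ereal (b x) \<le> ereal (a x) + ereal c" using d[OF x] by simp
    also have "\<dots> \<le> (SUP x\<in>S. ereal (a x)) + ereal c"
      by (intro add_right_mono SUP_upper x)
    finally show "ereal (b x) \<le> (SUP x\<in>S. ereal (a x)) + ereal c" .
  qed
  have fa: "(SUP x\<in>S. ereal (a x)) \<le> ereal B" by (rule SUP_least) (use ba in \<open>auto simp: abs_le_iff\<close>)
  have fb: "(SUP x\<in>S. ereal (b x)) \<le> ereal B" by (rule SUP_least) (use bb in \<open>auto simp: abs_le_iff\<close>)
  have ga: "ereal (- B) \<le> (SUP x\<in>S. ereal (a x))"
    proof (rule order_trans[OF _ SUP_upper[OF x0, of "\<lambda>x. ereal (a x)"]])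
    show "ereal (- B) \<le> ereal (a x0)" using ba[OF x0] by (simp add: abs_le_iff)
  qed
  have gb: "ereal (- B) \<le> (SUP x\<in>S. ereal (b x))"
    proof (rule order_trans[OF _ SUP_upper[OF x0, of "\<lambda>x. ereal (b x)"]])
    show "ereal (- B) \<le> ereal (b x0)" using bb[OF x0] by (simp add: abs_le_iff)
  qed
  obtain ra where ra: "(SUP x\<in>S. ereal (a x)) = ereal ra"
    using fa ga by (cases "(SUP x\<in>S. ereal (a x))") auto
  obtain rb where rb: "(SUP x\<in>S. ereal (b x)) = ereal rb"
    using fb gb by (cases "(SUP x\<in>S. ereal (b x))") auto
  show ?thesis using A1 A2 unfolding ra rb by simp
qed

theorem lemma6p3:
  fixes M :: "'a measure" and T :: real and F :: "real \<Rightarrow> 'a measure"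
    and Qs :: "'a measure set" and Y :: "real \<Rightarrow> 'a \<Rightarrow> real"
  assumes "prob_space M"
    and "0 < T"
    and "usual_filtration M T F"
    and "admissible_measures M Qs"
    and "right_continuous_process M T Y"
    and "adapted_process T F Y"
    and "bounded_paths M T Y"
    and "quasi_left_usc M T F Y"
    and "Ystar T Y \<in> L1Q M Qs"
    and "cont_from_above_at_0 M T Y Qs"
  shows "(\<lambda>k. SUP Q\<in>Qbar M T Y Qs.
            \<bar>stop_value M T F Q Y - stop_value M T F Q (trunc_proc Y k)\<bar>) \<longlonglongrightarrow> 0"
proof -
  note T0 = assms(2) and uf = assms(3) and adm = assms(4) and rc = assms(5) and ad = assms(6)
    and bp = assms(7) and L1 = assms(9) and cfa = assms(10)
  define Ys where "Ys = Ystar T Y"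
  define h where "h k \<omega> = max 0 (Ys \<omega> - real k)" for k :: nat and \<omega>
  define ST where "ST = stopping_times M T F"
  define QB where "QB = Qbar M T Y Qs"
  have Ysm: "Ys \<in> borel_measurable M" using L1 unfolding Ys_def L1Q_def by auto
  have Ybound: "\<bar>Y t \<omega>\<bar> \<le> Ys \<omega>" if "\<omega> \<in> space M" "t \<in> {0..T}" for \<omega> t
  proof -
    have "bounded ((\<lambda>t. Y t \<omega>) ` {0..T})" using bp that unfolding bounded_paths_def by auto
    then obtain a where a: "\<And>y. y \<in> (\<lambda>t. Y t \<omega>) ` {0..T} \<Longrightarrow> norm y \<le> a"
      unfolding bounded_iff by blast
    have "bdd_above ((\<lambda>t. \<bar>Y t \<omega>\<bar>) ` {0..T})"
      by (rule bdd_aboveI2[of _ _ a]) (use a in auto)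
    then show ?thesis unfolding Ys_def Ystar_def by (rule cSUP_upper[OF that(2)])
  qed
  have Ys0: "0 \<le> Ys \<omega>" if "\<omega> \<in> space M" for \<omega>
    using Ybound[OF that, of 0] T0 by auto
  have Xs: "f \<in> Xspace M T Y" if "f \<in> borel_measurable M" "\<And>\<omega>. \<omega> \<in> space M \<Longrightarrow> \<bar>f \<omega>\<bar> \<le> Ys \<omega>" for f
    unfolding Xspace_def
  proof (intro CollectI conjI that(1) exI[of _ 1])
    show "AE \<omega> in M. \<bar>f \<omega>\<bar> \<le> 1 * (Ystar T Y \<omega> + 1)"
    proof (rule AE_I2)
      fix \<omega> assume "\<omega> \<in> space M"
      then have "\<bar>f \<omega>\<bar> \<le> Ystar T Y \<omega>" using that(2) unfolding Ys_def by blast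
      then show "\<bar>f \<omega>\<bar> \<le> 1 * (Ystar T Y \<omega> + 1)" by simp
    qed
  qed simp
  have YsX: "Ys \<in> Xspace M T Y" by (rule Xs[OF Ysm]) (use Ys0 in auto)
  have hm: "h k \<in> borel_measurable M" for k unfolding h_def using Ysm by measurable
  have hX: "h k \<in> Xspace M T Y" for k
    by (rule Xs[OF hm]) (use Ys0 in \<open>auto simp: h_def\<close>)
  have trange: "\<tau> \<omega> \<in> {0..T}" if "\<tau> \<in> ST" "\<omega> \<in> space M" for \<tau> \<omega>
    using that unfolding ST_def stopping_times_def by auto
  have Ytm: "(\<lambda>\<omega>. Y (\<tau> \<omega>) \<omega>) \<in> borel_measurable M" if "\<tau> \<in> ST" for \<tau>
    using Ytau_meas[OF uf rc ad _ T0] that unfolding ST_def by auto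
  have YtX: "(\<lambda>\<omega>. Y (\<tau> \<omega>) \<omega>) \<in> Xspace M T Y" if "\<tau> \<in> ST" for \<tau>
    by (rule Xs[OF Ytm[OF that]]) (use Ybound trange[OF that] in auto)
  have trm: "(\<lambda>\<omega>. trunc_proc Y k (\<tau> \<omega>) \<omega>) \<in> borel_measurable M" if "\<tau> \<in> ST" for \<tau> k
    unfolding trunc_proc_def using Ytm[OF that] by measurable
  have trb: "\<bar>trunc_proc Y k (\<tau> \<omega>) \<omega>\<bar> \<le> \<bar>Y (\<tau> \<omega>) \<omega>\<bar>" for \<tau> k \<omega>
    unfolding trunc_proc_def by linarith
  have trX: "(\<lambda>\<omega>. trunc_proc Y k (\<tau> \<omega>) \<omega>) \<in> Xspace M T Y" if "\<tau> \<in> ST" for \<tau> k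
    by (rule Xs[OF trm[OF that]]) (use Ybound trange[OF that] trb in \<open>blast intro: order_trans\<close>)
  have difb: "\<bar>Y (\<tau> \<omega>) \<omega> - trunc_proc Y k (\<tau> \<omega>) \<omega>\<bar> \<le> h k \<omega>"
    if "\<tau> \<in> ST" "\<omega> \<in> space M" for \<tau> k \<omega>
  proof -
    have "\<bar>Y (\<tau> \<omega>) \<omega>\<bar> \<le> Ys \<omega>" using Ybound trange that by blast
    then show ?thesis unfolding trunc_proc_def h_def by linarith
  qed
  have STne: "ST \<noteq> {}"
  proof -
    have "(\<lambda>_. 0) \<in> ST"
      unfolding ST_def stopping_times_def
    proof (intro CollectI conjI ballI)
      fix t assume t: "t \<in> {0..T}"
      have "space (F t) = space M" using uf t unfolding usual_filtration_def by auto
      then show "{\<omega> \<in> space M. (0::real) \<le> t} \<in> sets (F t)" using t sets.top[of "F t"] by simp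
    qed (use T0 in auto)
    then show ?thesis by blast
  qed
  have key: "\<bar>stop_value M T F Q Y - stop_value M T F Q (trunc_proc Y k)\<bar> \<le> rhoQ Qs (h k)"
    if Q: "Q \<in> QB" for Q k
  proof -
    have pQ: "prob_space Q" and sQ: "sets Q = sets M"
      and iQ: "\<And>X. X \<in> Xspace M T Y \<Longrightarrow> integrable Q X \<and> ereal (\<integral>\<omega>. X \<omega> \<partial>Q) \<le> rhoQ Qs X"
      using Q unfolding QB_def Qbar_def by auto
    have spQ: "space Q = space M" using sets_eq_imp_space_eq[OF sQ] .
    define B where "B = (\<integral>\<omega>. Ys \<omega> \<partial>Q)"
    have iYs: "integrable Q Ys" using iQ[OF YsX] by auto
    have bnd: "\<bar>\<integral>\<omega>. f \<omega> \<partial>Q\<bar> \<le> B"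
      if "f \<in> Xspace M T Y" "\<And>\<omega>. \<omega> \<in> space M \<Longrightarrow> \<bar>f \<omega>\<bar> \<le> Ys \<omega>" for f
    proof -
      have fi: "integrable Q f" using iQ[OF that(1)] by auto
      have "(\<integral>\<omega>. f \<omega> \<partial>Q) \<le> B" unfolding B_def
        by (rule integral_mono[OF fi iYs]) (use that(2) spQ in \<open>auto simp: abs_le_iff\<close>)
      moreover have "- B \<le> (\<integral>\<omega>. f \<omega> \<partial>Q)"
      proof -
        have "(\<integral>\<omega>. - Ys \<omega> \<partial>Q) \<le> (\<integral>\<omega>. f \<omega> \<partial>Q)"
          by (rule integral_mono[OF integrable_minus[OF iYs] fi])
             (metis that(2) spQ abs_le_D2 minus_le_iff)
        then show ?thesis by (simp add: B_def)
      qed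
      ultimately show ?thesis by linarith
    qed
    have "\<bar>stop_value M T F Q Y - stop_value M T F Q (trunc_proc Y k)\<bar> \<le> ereal (\<integral>\<omega>. h k \<omega> \<partial>Q)"
      unfolding stop_value_def ST_def[symmetric]
    proof (rule sup_diff_bound[OF STne])
      fix \<tau> assume t: "\<tau> \<in> ST"
      show "\<bar>\<integral>\<omega>. Y (\<tau> \<omega>) \<omega> \<partial>Q\<bar> \<le> B"
        by (rule bnd[OF YtX[OF t]]) (use Ybound trange[OF t] in auto)
      show "\<bar>\<integral>\<omega>. trunc_proc Y k (\<tau> \<omega>) \<omega> \<partial>Q\<bar> \<le> B"
        by (rule bnd[OF trX[OF t]]) (use Ybound trange[OF t] trb in \<open>blast intro: order_trans\<close>)
      have i1: "integrable Q (\<lambda>\<omega>. Y (\<tau> \<omega>) \<omega>)" using iQ[OF YtX[OF t]] by auto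
      have i2: "integrable Q (\<lambda>\<omega>. trunc_proc Y k (\<tau> \<omega>) \<omega>)" using iQ[OF trX[OF t]] by auto
      have i3: "integrable Q (h k)" using iQ[OF hX] by auto
      have "(\<integral>\<omega>. Y (\<tau> \<omega>) \<omega> \<partial>Q) \<le> (\<integral>\<omega>. trunc_proc Y k (\<tau> \<omega>) \<omega> + h k \<omega> \<partial>Q)"
        by (rule integral_mono[OF i1 Bochner_Integration.integrable_add[OF i2 i3]])
           (use difb[OF t, of _ k] spQ in \<open>metis abs_le_D1 abs_le_D2 abs_minus_commute diff_le_eq add.commute\<close>)
      moreover have "(\<integral>\<omega>. trunc_proc Y k (\<tau> \<omega>) \<omega> \<partial>Q) \<le> (\<integral>\<omega>. Y (\<tau> \<omega>) \<omega> + h k \<omega> \<partial>Q)"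
        by (rule integral_mono[OF i2 Bochner_Integration.integrable_add[OF i1 i3]])
           (use difb[OF t, of _ k] spQ in \<open>metis abs_le_D1 abs_le_D2 abs_minus_commute diff_le_eq add.commute\<close>)
      ultimately show "\<bar>(\<integral>\<omega>. Y (\<tau> \<omega>) \<omega> \<partial>Q) - (\<integral>\<omega>. trunc_proc Y k (\<tau> \<omega>) \<omega> \<partial>Q)\<bar> \<le> (\<integral>\<omega>. h k \<omega> \<partial>Q)"
        using Bochner_Integration.integral_add[OF i2 i3] Bochner_Integration.integral_add[OF i1 i3] by linarith
    qed
    also have "\<dots> \<le> rhoQ Qs (h k)" using iQ[OF hX] by auto
    finally show ?thesis .
  qed
  obtain Q0 where Q0: "Q0 \<in> Qs" using adm unfolding admissible_measures_def by (meson ex_in_conv)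
  have Q0B: "Q0 \<in> QB"
  proof -
    have pQ: "prob_space Q0" and sQ: "sets Q0 = sets M" and ac: "absolutely_continuous M Q0"
      using adm Q0 unfolding admissible_measures_def by auto
    have fin: "(\<integral>\<^sup>+ \<omega>. ennreal \<bar>Ys \<omega>\<bar> \<partial>Q0) < \<infinity>"
      using L1 SUP_upper[OF Q0, of "\<lambda>Q. \<integral>\<^sup>+ \<omega>. ennreal \<bar>Ys \<omega>\<bar> \<partial>Q"]
      unfolding L1Q_def Ys_def by auto
    have YsmQ: "Ys \<in> borel_measurable Q0" using Ysm measurable_cong_sets[OF sQ refl] by blast
    have iYs: "integrable Q0 Ys" by (rule integrableI_bounded[OF YsmQ]) (use fin in simp)
    have "integrable Q0 X \<and> ereal (\<integral>\<omega>. X \<omega> \<partial>Q0) \<le> rhoQ Qs X" if X: "X \<in> Xspace M T Y" for X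
    proof
      obtain C where C: "C > 0" "AE \<omega> in M. \<bar>X \<omega>\<bar> \<le> C * (Ystar T Y \<omega> + 1)" and Xm: "X \<in> borel_measurable M"
        using X unfolding Xspace_def by auto
      have XmQ: "X \<in> borel_measurable Q0" using Xm measurable_cong_sets[OF sQ refl] by blast
      have AQ: "AE \<omega> in Q0. \<bar>X \<omega>\<bar> \<le> C * (Ys \<omega> + 1)"
        using absolutely_continuous_AE[OF sQ ac C(2)] unfolding Ys_def .
      have ib: "integrable Q0 (\<lambda>\<omega>. C * (Ys \<omega> + 1))"
        using iYs finite_measure.integrable_const[OF prob_space.finite_measure[OF pQ]] by (intro integrable_mult_right Bochner_Integration.integrable_add) auto
      show "integrable Q0 X"
        by (rule Bochner_Integration.integrable_bound[OF ib XmQ]) (use AQ in \<open>auto elim!: eventually_mono\<close>)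
      show "ereal (\<integral>\<omega>. X \<omega> \<partial>Q0) \<le> rhoQ Qs X"
        unfolding rhoQ_def by (rule SUP_upper[OF Q0])
    qed
    then show ?thesis unfolding QB_def Qbar_def using pQ sQ by auto
  qed
  have rho_lim: "(\<lambda>k. rhoQ Qs (h k)) \<longlonglongrightarrow> 0"
  proof -
    have dec: "decseq (\<lambda>n. h n \<omega>)" for \<omega>
      unfolding decseq_def h_def by (auto intro!: max.mono)
    have conv: "(\<lambda>n. h n \<omega>) \<longlonglongrightarrow> 0" for \<omega>
    proof (rule tendsto_eventually)
      obtain N :: nat where N: "Ys \<omega> < real N" using reals_Archimedean2 by blast
      show "\<forall>\<^sub>F n in sequentially. h n \<omega> = 0"
        unfolding eventually_sequentially
        by (rule exI[of _ N]) (use N in \<open>auto simp: h_def\<close>)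
    qed
    show ?thesis using cfa hX dec conv unfolding cont_from_above_at_0_def by auto
  qed
  show ?thesis
    unfolding QB_def[symmetric]
  proof (rule tendsto_sandwich[OF _ _ tendsto_const rho_lim])
    show "\<forall>\<^sub>F k in sequentially. 0 \<le> (SUP Q\<in>QB. \<bar>stop_value M T F Q Y - stop_value M T F Q (trunc_proc Y k)\<bar>)"
      by (rule always_eventually) (auto intro!: SUP_upper2[OF Q0B])
    show "\<forall>\<^sub>F k in sequentially. (SUP Q\<in>QB. \<bar>stop_value M T F Q Y - stop_value M T F Q (trunc_proc Y k)\<bar>) \<le> rhoQ Qs (h k)"
      by (rule always_eventually) (auto intro!: SUP_least key)
  qed
qed

end
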